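(* Let $p$ be a prime and $G=S^1\times C_p$. There exists a $G$-equivariant continuous map $h:S(V_{1,0}\oplus V_{1,1})\to S(V_{p,0}\oplus V_{0,1})$.
   Context: Let $a$ be a generator of $C_p$ and $\xi_p=e^{2\pi\sqrt{-1}/p}$. For $k\in\mathbb{Z}$ and $l\in\mathbb{Z}/p$, $V_{k,l}$ is the $1$-dimensional unitary $G$-representation on $\mathbb{C}$ with $(t,a^j)\cdot z=t^k\xi_p^{jl}z$ for $t\in S^1$. $S(\cdot)$ denotes the unit sphere. *)

theory Defs
  imports "HOL-Analysis.Analysis"
begin

definition xi :: "nat \<Rightarrow> complex" where
  "xi p = exp (2 * pi * \<i> / of_nat p)"

text \<open>Action of the group element (t, a^j) of S^1 x C_p on the one-dimensional
  representation V_{k,l} = C:  (t, a^j) . z = t^k xi_p^(j l) z.  The class l in Z/p is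
  represented by an integer; the action only depends on l mod p since xi_p^p = 1.\<close>
definition V_act :: "nat \<Rightarrow> int \<Rightarrow> int \<Rightarrow> complex \<Rightarrow> int \<Rightarrow> complex \<Rightarrow> complex" where
  "V_act p k l t j z = t powi k * xi p powi (j * l) * z"

definition dsum_act :: "nat \<Rightarrow> int \<Rightarrow> int \<Rightarrow> int \<Rightarrow> int \<Rightarrow> complex \<Rightarrow> int
    \<Rightarrow> complex \<times> complex \<Rightarrow> complex \<times> complex" where
  "dsum_act p k1 l1 k2 l2 t j x = (V_act p k1 l1 t j (fst x), V_act p k2 l2 t j (snd x))"

end

theory Submission
  imports Defs
begin

definition ff :: "nat \<Rightarrow> complex \<times> complex \<Rightarrow> complex \<times> complex" where
  "ff p x = (fst x ^ p + snd x ^ p, snd x * cnj (fst x))"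

lemma xi_pow: "p > 0 \<Longrightarrow> xi p ^ p = 1"
proof -
  assume "p > 0"
  have "xi p ^ p = exp (of_nat p * (2 * pi * \<i> / of_nat p))"
    unfolding xi_def by (simp only: exp_of_nat_mult)
  also have "\<dots> = exp (2 * pi * \<i>)" using \<open>p>0\<close> by simp
  finally show ?thesis by simp
qed

lemma xi_norm: "cmod (xi p) = 1"
  unfolding xi_def by (simp add: norm_exp_eq_Re)

lemma xi_powi_pow: "p > 0 \<Longrightarrow> (xi p powi j) ^ p = 1"
proof -
  assume "p > 0"
  have "(xi p powi j) ^ p = (xi p ^ p) powi j"
    by (metis power_int_mult power_int_of_nat mult.commute)
  thus ?thesis using xi_pow[OF \<open>p>0\<close>] by simp
qed

lemma ff_nz: "p > 0 \<Longrightarrow> x \<in> sphere 0 1 \<Longrightarrow> ff p x \<noteq> 0"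
proof
  assume p: "p > 0" and x: "x \<in> sphere 0 1" and f: "ff p x = 0"
  obtain z w where xe: "x = (z, w)" by fastforce
  from f have a: "z ^ p + w ^ p = 0" and b: "w * cnj z = 0"
    by (auto simp: ff_def xe zero_prod_def)
  from b have "w = 0 \<or> z = 0" by auto
  with a p have "z = 0 \<and> w = 0" by (auto simp: zero_power)
  with x xe show False by (simp add: zero_prod_def)
qed

lemma ff_equiv:
  assumes "cmod t = 1"
  shows "ff p (dsum_act p 1 0 1 1 t j x) = dsum_act p (int p) 0 0 1 t j (ff p x)"
proof -
  obtain z w where xe: "x = (z, w)" by fastforce
  let ?u = "xi p powi j"
  have tt: "cnj t * t = 1" using assms
    using complex_norm_square[of t] by (simp add: mult.commute)
  have up: "?u ^ p = 1 \<or> p = 0" using xi_powi_pow by blast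
  have L: "dsum_act p 1 0 1 1 t j x = (t * z, t * ?u * w)"
    by (simp add: dsum_act_def V_act_def xe)
  have R: "dsum_act p (int p) 0 0 1 t j (ff p x) = (t ^ p * (z ^ p + w ^ p), ?u * (w * cnj z))"
    by (simp add: dsum_act_def V_act_def xe ff_def power_int_of_nat)
  have e1: "(t * z) ^ p + (t * ?u * w) ^ p = t ^ p * (z ^ p + w ^ p)"
  proof (cases "p = 0")
    case True thus ?thesis by simp
  next
    case False
    hence u1: "?u ^ p = 1" using up by blast
    have "(t * ?u * w) ^ p = t ^ p * w ^ p" by (simp only: power_mult_distrib u1 mult_1_right)
    thus ?thesis by (simp add: power_mult_distrib distrib_left)
  qed
  have e2: "t * ?u * w * cnj (t * z) = ?u * (w * cnj z)"
  proof -
    have "t * ?u * w * cnj (t * z) = (cnj t * t) * (?u * (w * cnj z))" by (simp add: ac_simps)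
    thus ?thesis using tt by (simp add: mult.commute)
  qed
  have "ff p (t * z, t * ?u * w) = ((t * z) ^ p + (t * ?u * w) ^ p, t * ?u * w * cnj (t * z))"
    by (simp only: ff_def fst_conv snd_conv)
  also have "\<dots> = (t ^ p * (z ^ p + w ^ p), ?u * (w * cnj z))" by (simp only: e1 e2)
  finally show ?thesis unfolding L R .
qed

theorem lemma4p2:
  fixes p :: nat
  assumes "prime p"
  shows "\<exists>h :: complex \<times> complex \<Rightarrow> complex \<times> complex.
           continuous_on (sphere 0 1) h \<and>
           h ` sphere 0 1 \<subseteq> sphere 0 1 \<and>
           (\<forall>t j x. cmod t = 1 \<longrightarrow> x \<in> sphere 0 1 \<longrightarrow>
              h (dsum_act p 1 0 1 1 t j x) = dsum_act p (int p) 0 0 1 t j (h x))"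
proof (intro exI[of _ "\<lambda>x. (1 / norm (ff p x)) *\<^sub>R ff p x"] conjI allI impI)
  have p: "p > 0" using assms prime_gt_0_nat by blast
  have cf: "continuous_on (sphere 0 1) (ff p)"
    unfolding ff_def by (intro continuous_intros)
  show "continuous_on (sphere 0 1) (\<lambda>x. (1 / norm (ff p x)) *\<^sub>R ff p x)"
    using ff_nz[OF p] by (intro continuous_intros cf) auto
  show "(\<lambda>x. (1 / norm (ff p x)) *\<^sub>R ff p x) ` sphere 0 1 \<subseteq> sphere 0 1"
    using ff_nz[OF p] by auto
  fix t :: complex and j :: int and x :: "complex \<times> complex"
  assume t: "cmod t = 1" and x: "x \<in> sphere 0 1"
  have tp: "cmod (t ^ p) = 1" using t by (simp add: norm_power)
  have xj: "cmod (xi p powi j) = 1" using xi_norm by (simp add: norm_power_int)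
  have nm: "norm (dsum_act p (int p) 0 0 1 t j y) = norm y" for y
    using tp xj by (cases y) (simp add: dsum_act_def V_act_def norm_Pair norm_mult)
  have lin: "dsum_act p (int p) 0 0 1 t j (c *\<^sub>R y) = c *\<^sub>R dsum_act p (int p) 0 0 1 t j y" for c y
    by (cases y) (simp add: dsum_act_def V_act_def scaleR_conv_of_real)
  show "(1 / norm (ff p (dsum_act p 1 0 1 1 t j x))) *\<^sub>R ff p (dsum_act p 1 0 1 1 t j x) =
        dsum_act p (int p) 0 0 1 t j ((1 / norm (ff p x)) *\<^sub>R ff p x)"
    unfolding ff_equiv[OF t] nm lin ..
qed

end
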